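(* The monoidal category $\mathcal{TL}_0(\Bbbk)$ is not rigid.
   Context: $\Bbbk$ is a field. $\mathcal{TL}_0(\Bbbk)$ is the strict $\Bbbk$-linear monoidal category with objects $\mathbf 0,\mathbf 1,\dots$, $\mathbf m\otimes\mathbf n=\mathbf{m+n}$, unit $\mathbf 0$, whose morphisms are generated under composition, tensor product and linear combination by $\mathrm{cup}:\mathbf 0\to\mathbf 2$ and $\mathrm{cap}:\mathbf 2\to\mathbf 0$ subject to $(\mathrm{id}_{\mathbf 1}\otimes\mathrm{cap})\circ(\mathrm{cup}\otimes\mathrm{id}_{\mathbf 1})=0$, $(\mathrm{cap}\otimes\mathrm{id}_{\mathbf 1})\circ(\mathrm{id}_{\mathbf 1}\otimes\mathrm{cup})=0$ and $\mathrm{cap}\circ\mathrm{cup}=\mathrm{id}_{\mathbf 0}$. A monoidal category is rigid if every object has both a left and a right dual. *)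

theory Defs
  imports Main
begin

text \<open>Objects are natural numbers (m tensor n = m + n, unit 0).
  Morphism expressions are built from identities, cup, cap, composition,
  tensor product and linear combinations; hom-spaces are the typed
  expressions modulo the smallest congruence making the result a strict
  k-linear monoidal category and imposing the three defining relations.\<close>

datatype 'k mor =
    Id nat
  | Cup
  | Cap
  | Comp "'k mor" "'k mor"
  | Tens "'k mor" "'k mor"
  | Zero nat nat
  | Add "'k mor" "'k mor"
  | Smul 'k "'k mor"

text \<open>Comp f g is f after g.
  mtyp f a b : f is a morphism from object a to object b.\<close>
inductive mtyp :: "'k mor \<Rightarrow> nat \<Rightarrow> nat \<Rightarrow> bool" where
  mtyp_Id: "mtyp (Id n) n n"
| mtyp_Cup: "mtyp Cup 0 2"
| mtyp_Cap: "mtyp Cap 2 0"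
| mtyp_Comp: "mtyp g a b \<Longrightarrow> mtyp f b c \<Longrightarrow> mtyp (Comp f g) a c"
| mtyp_Tens: "mtyp f a b \<Longrightarrow> mtyp g c d \<Longrightarrow> mtyp (Tens f g) (a + c) (b + d)"
| mtyp_Zero: "mtyp (Zero a b) a b"
| mtyp_Add: "mtyp f a b \<Longrightarrow> mtyp g a b \<Longrightarrow> mtyp (Add f g) a b"
| mtyp_Smul: "mtyp f a b \<Longrightarrow> mtyp (Smul c f) a b"

inductive tl0_eq :: "'k::field mor \<Rightarrow> 'k mor \<Rightarrow> bool" where
  refl: "mtyp f a b \<Longrightarrow> tl0_eq f f"
| sym: "tl0_eq f g \<Longrightarrow> tl0_eq g f"
| trans: "tl0_eq f g \<Longrightarrow> tl0_eq g h \<Longrightarrow> tl0_eq f h"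
| cong_Comp: "tl0_eq f f' \<Longrightarrow> tl0_eq g g' \<Longrightarrow> mtyp g a b \<Longrightarrow> mtyp f b c
    \<Longrightarrow> tl0_eq (Comp f g) (Comp f' g')"
| cong_Tens: "tl0_eq f f' \<Longrightarrow> tl0_eq g g' \<Longrightarrow> tl0_eq (Tens f g) (Tens f' g')"
| cong_Add: "tl0_eq f f' \<Longrightarrow> tl0_eq g g' \<Longrightarrow> mtyp f a b \<Longrightarrow> mtyp g a b
    \<Longrightarrow> tl0_eq (Add f g) (Add f' g')"
| cong_Smul: "tl0_eq f f' \<Longrightarrow> tl0_eq (Smul c f) (Smul c f')"
| add_assoc: "mtyp f a b \<Longrightarrow> mtyp g a b \<Longrightarrow> mtyp h a b
    \<Longrightarrow> tl0_eq (Add (Add f g) h) (Add f (Add g h))"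
| add_comm: "mtyp f a b \<Longrightarrow> mtyp g a b \<Longrightarrow> tl0_eq (Add f g) (Add g f)"
| add_zero: "mtyp f a b \<Longrightarrow> tl0_eq (Add f (Zero a b)) f"
| add_neg: "mtyp f a b \<Longrightarrow> tl0_eq (Add f (Smul (-1) f)) (Zero a b)"
| smul_add: "mtyp f a b \<Longrightarrow> mtyp g a b \<Longrightarrow> tl0_eq (Smul c (Add f g)) (Add (Smul c f) (Smul c g))"
| add_smul: "mtyp f a b \<Longrightarrow> tl0_eq (Smul (c + d) f) (Add (Smul c f) (Smul d f))"
| smul_smul: "mtyp f a b \<Longrightarrow> tl0_eq (Smul c (Smul d f)) (Smul (c * d) f)"
| smul_one: "mtyp f a b \<Longrightarrow> tl0_eq (Smul 1 f) f"
| comp_add_left: "mtyp f b c \<Longrightarrow> mtyp f' b c \<Longrightarrow> mtyp g a b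
    \<Longrightarrow> tl0_eq (Comp (Add f f') g) (Add (Comp f g) (Comp f' g))"
| comp_add_right: "mtyp f b c \<Longrightarrow> mtyp g a b \<Longrightarrow> mtyp g' a b
    \<Longrightarrow> tl0_eq (Comp f (Add g g')) (Add (Comp f g) (Comp f g'))"
| comp_smul_left: "mtyp f b c \<Longrightarrow> mtyp g a b \<Longrightarrow> tl0_eq (Comp (Smul k f) g) (Smul k (Comp f g))"
| comp_smul_right: "mtyp f b c \<Longrightarrow> mtyp g a b \<Longrightarrow> tl0_eq (Comp f (Smul k g)) (Smul k (Comp f g))"
| tens_add_left: "mtyp f a b \<Longrightarrow> mtyp f' a b \<Longrightarrow> mtyp g c d
    \<Longrightarrow> tl0_eq (Tens (Add f f') g) (Add (Tens f g) (Tens f' g))"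
| tens_add_right: "mtyp f a b \<Longrightarrow> mtyp g c d \<Longrightarrow> mtyp g' c d
    \<Longrightarrow> tl0_eq (Tens f (Add g g')) (Add (Tens f g) (Tens f g'))"
| tens_smul_left: "mtyp f a b \<Longrightarrow> mtyp g c d \<Longrightarrow> tl0_eq (Tens (Smul k f) g) (Smul k (Tens f g))"
| tens_smul_right: "mtyp f a b \<Longrightarrow> mtyp g c d \<Longrightarrow> tl0_eq (Tens f (Smul k g)) (Smul k (Tens f g))"
| id_left: "mtyp f a b \<Longrightarrow> tl0_eq (Comp (Id b) f) f"
| id_right: "mtyp f a b \<Longrightarrow> tl0_eq (Comp f (Id a)) f"
| comp_assoc: "mtyp h a b \<Longrightarrow> mtyp g b c \<Longrightarrow> mtyp f c d
    \<Longrightarrow> tl0_eq (Comp (Comp f g) h) (Comp f (Comp g h))"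
| tens_assoc: "mtyp f a b \<Longrightarrow> mtyp g c d \<Longrightarrow> mtyp h e e'
    \<Longrightarrow> tl0_eq (Tens (Tens f g) h) (Tens f (Tens g h))"
| tens_unit_left: "mtyp f a b \<Longrightarrow> tl0_eq (Tens (Id 0) f) f"
| tens_unit_right: "mtyp f a b \<Longrightarrow> tl0_eq (Tens f (Id 0)) f"
| tens_id: "tl0_eq (Tens (Id m) (Id n)) (Id (m + n))"
| interchange: "mtyp f' a b \<Longrightarrow> mtyp f b c \<Longrightarrow> mtyp g' d e \<Longrightarrow> mtyp g e e'
    \<Longrightarrow> tl0_eq (Comp (Tens f g) (Tens f' g')) (Tens (Comp f f') (Comp g g'))"
| rel_zigzag1: "tl0_eq (Comp (Tens (Id 1) Cap) (Tens Cup (Id 1))) (Zero 1 1)"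
| rel_zigzag2: "tl0_eq (Comp (Tens Cap (Id 1)) (Tens (Id 1) Cup)) (Zero 1 1)"
| rel_loop: "tl0_eq (Comp Cap Cup) (Id 0)"

text \<open>Y is a left dual of X (equivalently X is a right dual of Y), witnessed by
  evaluation ev : Y \<otimes> X \<rightarrow> 0 and coevaluation coev : 0 \<rightarrow> X \<otimes> Y satisfying
  the two zigzag (snake) identities.\<close>
definition tl0_left_dual :: "'k::field itself \<Rightarrow> nat \<Rightarrow> nat \<Rightarrow> bool" where
  "tl0_left_dual _ Y X \<longleftrightarrow> (\<exists>(ev :: 'k mor) coev.
      mtyp ev (Y + X) 0 \<and> mtyp coev 0 (X + Y) \<and>
      tl0_eq (Comp (Tens (Id X) ev) (Tens coev (Id X))) (Id X) \<and>
      tl0_eq (Comp (Tens ev (Id Y)) (Tens (Id Y) coev)) (Id Y))"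

definition tl0_rigid :: "'k::field itself \<Rightarrow> bool" where
  "tl0_rigid K \<longleftrightarrow> (\<forall>X. (\<exists>Y. tl0_left_dual K Y X) \<and> (\<exists>Z. tl0_left_dual K X Z))"

end

theory Submission
  imports Defs
begin

fun mdom :: "'k mor \<Rightarrow> nat" and mcod :: "'k mor \<Rightarrow> nat" where
  "mdom (Id n) = n" | "mdom Cup = 0" | "mdom Cap = 2"
| "mdom (Comp f g) = mdom g" | "mdom (Tens f g) = mdom f + mdom g"
| "mdom (Zero a b) = a" | "mdom (Add f g) = mdom f" | "mdom (Smul c f) = mdom f"
| "mcod (Id n) = n" | "mcod Cup = 2" | "mcod Cap = 0"
| "mcod (Comp f g) = mcod f" | "mcod (Tens f g) = mcod f + mcod g"
| "mcod (Zero a b) = b" | "mcod (Add f g) = mcod f" | "mcod (Smul c f) = mcod f"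

lemma mtyp_dc: "mtyp f a b \<Longrightarrow> mdom f = a \<and> mcod f = b"
  by (induction rule: mtyp.induct) auto

definition W :: "nat \<Rightarrow> bool list set" where "W n = {w. length w = n}"

lemma finite_W: "finite (W n)"
proof -
  have "W n = {xs. set xs \<subseteq> UNIV \<and> length xs = n}" by (auto simp: W_def)
  thus ?thesis using finite_lists_length_eq[of "UNIV :: bool set" n] by simp
qed

fun sem :: "'k::field mor \<Rightarrow> bool list \<Rightarrow> bool list \<Rightarrow> 'k" where
  "sem (Id n) v u = (if v = u then 1 else 0)"
| "sem Cup v u = (if v = [True, False] \<and> u = [] then 1 else 0)"
| "sem Cap v u = (if v = [] \<and> u = [True, False] then 1 else 0)"
| "sem (Comp f g) v u = (\<Sum>w\<in>W (mdom f). sem f v w * sem g w u)"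
| "sem (Tens f g) v u = sem f (take (mcod f) v) (take (mdom f) u) * sem g (drop (mcod f) v) (drop (mdom f) u)"
| "sem (Zero a b) v u = 0"
| "sem (Add f g) v u = sem f v u + sem g v u"
| "sem (Smul c f) v u = c * sem f v u"

lemma sum_W_add: "(\<Sum>w\<in>W (m + n). h w) = (\<Sum>x\<in>W m. \<Sum>y\<in>W n. h (x @ y))"
proof -
  have bij: "bij_betw (\<lambda>(x, y). x @ y) (W m \<times> W n) (W (m + n))"
    unfolding bij_betw_def
  proof
    show "inj_on (\<lambda>(x, y). x @ y) (W m \<times> W n)"
      by (auto simp: inj_on_def W_def)
    show "(\<lambda>(x, y). x @ y) ` (W m \<times> W n) = W (m + n)"
    proof
      show "(\<lambda>(x, y). x @ y) ` (W m \<times> W n) \<subseteq> W (m + n)" by (auto simp: W_def)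
      show "W (m + n) \<subseteq> (\<lambda>(x, y). x @ y) ` (W m \<times> W n)"
      proof
        fix w assume "w \<in> W (m + n)"
        hence "(take m w, drop m w) \<in> W m \<times> W n" by (auto simp: W_def)
        moreover have "w = (\<lambda>(x, y). x @ y) (take m w, drop m w)" by simp
        ultimately show "w \<in> (\<lambda>(x, y). x @ y) ` (W m \<times> W n)" by blast
      qed
    qed
  qed
  have "(\<Sum>w\<in>W (m + n). h w) = (\<Sum>p\<in>W m \<times> W n. h ((\<lambda>(x, y). x @ y) p))"
    using sum.reindex_bij_betw[OF bij, of h] by simp
  also have "\<dots> = (\<Sum>x\<in>W m. \<Sum>y\<in>W n. h (x @ y))"
    by (simp add: sum.cartesian_product' split_def)
  finally show ?thesis .
qed

lemma delta_l: "(if P then 1 else 0) * (x::'k::field) = (if P then x else 0)" by simp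
lemma delta_r: "(x::'k::field) * (if P then 1 else 0) = (if P then x else 0)" by simp

definition P :: "'k::field mor \<Rightarrow> 'k mor \<Rightarrow> bool" where
  "P f g \<longleftrightarrow> (\<exists>a b. mtyp f a b \<and> mtyp g a b \<and>
     (\<forall>v u. length v = b \<longrightarrow> length u = a \<longrightarrow> sem f v u = sem g v u))"

lemma sound: "tl0_eq f g \<Longrightarrow> P f g"
proof (induction rule: tl0_eq.induct)
  case (refl f a b) then show ?case by (auto simp: P_def)
next
  case (sym f g) then show ?case by (auto simp: P_def) (metis)
next
  case (trans f g h) then show ?case unfolding P_def
    by (metis mtyp_dc)
next
  case (cong_Comp f f' g g' a b c)
  from cong_Comp.IH obtain a1 b1 where f1: "mtyp f a1 b1" "mtyp f' a1 b1"
    "\<forall>v u. length v = b1 \<longrightarrow> length u = a1 \<longrightarrow> sem f v u = sem f' v u" by (auto simp: P_def)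
  from cong_Comp.IH obtain a2 b2 where g1: "mtyp g a2 b2" "mtyp g' a2 b2"
    "\<forall>v u. length v = b2 \<longrightarrow> length u = a2 \<longrightarrow> sem g v u = sem g' v u" by (auto simp: P_def)
  have e: "a1 = b" "b1 = c" "a2 = a" "b2 = b" using f1 g1 cong_Comp.hyps mtyp_dc by metis+
  have d: "mdom f = b" "mdom f' = b" using f1 e mtyp_dc by metis+
  show ?case unfolding P_def
  proof (intro exI conjI allI impI)
    show "mtyp (Comp f g) a c" "mtyp (Comp f' g') a c" using f1 g1 e by (auto intro: mtyp.intros)
    fix v u :: "bool list" assume "length v = c" "length u = a"
    thus "sem (Comp f g) v u = sem (Comp f' g') v u"
      using f1(3) g1(3) e d by (auto simp: W_def intro!: sum.cong)
  qed
next
  case (cong_Tens f f' g g')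
  from cong_Tens.IH obtain a1 b1 where f1: "mtyp f a1 b1" "mtyp f' a1 b1"
    "\<forall>v u. length v = b1 \<longrightarrow> length u = a1 \<longrightarrow> sem f v u = sem f' v u" by (auto simp: P_def)
  from cong_Tens.IH obtain a2 b2 where g1: "mtyp g a2 b2" "mtyp g' a2 b2"
    "\<forall>v u. length v = b2 \<longrightarrow> length u = a2 \<longrightarrow> sem g v u = sem g' v u" by (auto simp: P_def)
  have d: "mdom f = a1" "mdom f' = a1" "mcod f = b1" "mcod f' = b1" using f1 mtyp_dc by metis+
  show ?case unfolding P_def
  proof (intro exI conjI allI impI)
    show "mtyp (Tens f g) (a1+a2) (b1+b2)" "mtyp (Tens f' g') (a1+a2) (b1+b2)" using f1 g1 by (auto intro: mtyp.intros)
    fix v u :: "bool list" assume "length v = b1+b2" "length u = a1+a2"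
    thus "sem (Tens f g) v u = sem (Tens f' g') v u"
      using f1(3) g1(3) d by simp
  qed
next
  case (cong_Add f f' g g' a b)
  from cong_Add.IH obtain a1 b1 where f1: "mtyp f a1 b1" "mtyp f' a1 b1"
    "\<forall>v u. length v = b1 \<longrightarrow> length u = a1 \<longrightarrow> sem f v u = sem f' v u" by (auto simp: P_def)
  from cong_Add.IH obtain a2 b2 where g1: "mtyp g a2 b2" "mtyp g' a2 b2"
    "\<forall>v u. length v = b2 \<longrightarrow> length u = a2 \<longrightarrow> sem g v u = sem g' v u" by (auto simp: P_def)
  have e: "a1 = a" "b1 = b" "a2 = a" "b2 = b" using f1 g1 cong_Add.hyps mtyp_dc by metis+
  show ?case unfolding P_def
  proof (intro exI conjI allI impI)
    show "mtyp (Add f g) a b" "mtyp (Add f' g') a b" using f1 g1 e by (auto intro: mtyp.intros)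
    fix v u :: "bool list" assume "length v = b" "length u = a"
    thus "sem (Add f g) v u = sem (Add f' g') v u"
      using f1(3) g1(3) e by simp
  qed
next
  case (cong_Smul f f' c)
  then show ?case by (auto simp: P_def intro: mtyp.intros)
next
  case (add_assoc f a b g h)
  then show ?case by (auto simp: P_def intro!: mtyp.intros)
next
  case (add_comm f a b g)
  then show ?case by (auto simp: P_def intro!: mtyp.intros)
next
  case (add_zero f a b)
  then show ?case by (auto simp: P_def intro!: mtyp.intros)
next
  case (add_neg f a b)
  then show ?case by (auto simp: P_def intro!: mtyp.intros)
next
  case (smul_add f a b g c)
  then show ?case by (auto simp: P_def algebra_simps intro!: mtyp.intros)
next
  case (add_smul f a b c d)
  then show ?case by (auto simp: P_def algebra_simps intro!: mtyp.intros)
next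
  case (smul_smul f a b c d)
  then show ?case by (auto simp: P_def algebra_simps intro!: mtyp.intros)
next
  case (smul_one f a b)
  then show ?case by (auto simp: P_def intro!: mtyp.intros)
next
  case (comp_add_left f b c f' g a)
  then have d: "mdom f = b" "mdom f' = b" using mtyp_dc by metis+
  show ?case using comp_add_left d
    by (auto simp: P_def algebra_simps sum.distrib intro!: mtyp.intros)
next
  case (comp_add_right f b c g a g')
  then have d: "mdom f = b" using mtyp_dc by metis+
  show ?case using comp_add_right d
    by (auto simp: P_def algebra_simps sum.distrib intro!: mtyp.intros)
next
  case (comp_smul_left f b c g a k)
  then have d: "mdom f = b" using mtyp_dc by metis+
  show ?case using comp_smul_left d
    by (auto simp: P_def algebra_simps sum_distrib_left intro!: mtyp.intros)
next
  case (comp_smul_right f b c g a k)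
  then have d: "mdom f = b" using mtyp_dc by metis+
  show ?case using comp_smul_right d
    by (auto simp: P_def algebra_simps sum_distrib_left intro!: mtyp.intros)
next
  case (tens_add_left f a b f' g c d)
  then have d: "mdom f = a" "mdom f' = a" "mcod f = b" "mcod f' = b" using mtyp_dc by metis+
  show ?case using tens_add_left d
    by (auto simp: P_def algebra_simps intro!: mtyp.intros)
next
  case (tens_add_right f a b g c d g')
  then have d: "mdom f = a" "mcod f = b" using mtyp_dc by metis+
  show ?case using tens_add_right d
    by (auto simp: P_def algebra_simps intro!: mtyp.intros)
next
  case (tens_smul_left f a b g c d k)
  then have d: "mdom f = a" "mcod f = b" using mtyp_dc by metis+
  show ?case using tens_smul_left d
    by (auto simp: P_def algebra_simps intro!: mtyp.intros)
next
  case (tens_smul_right f a b g c d k)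
  then have d: "mdom f = a" "mcod f = b" using mtyp_dc by metis+
  show ?case using tens_smul_right d
    by (auto simp: P_def algebra_simps intro!: mtyp.intros)
next
  case (id_left f a b)
  show ?case unfolding P_def
  proof (intro exI conjI allI impI)
    show "mtyp (Comp (Id b) f) a b" "mtyp f a b" using id_left by (auto intro: mtyp.intros)
    fix v u :: "bool list" assume "length v = b" "length u = a"
    hence "v \<in> W b" by (simp add: W_def)
    thus "sem (Comp (Id b) f) v u = sem f v u"
      by (simp add: delta_l finite_W)
  qed
next
  case (id_right f a b)
  have d: "mdom f = a" using id_right mtyp_dc by metis
  show ?case unfolding P_def
  proof (intro exI conjI allI impI)
    show "mtyp (Comp f (Id a)) a b" "mtyp f a b" using id_right by (auto intro: mtyp.intros)
    fix v u :: "bool list" assume "length v = b" "length u = a"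
    hence "u \<in> W a" by (simp add: W_def)
    thus "sem (Comp f (Id a)) v u = sem f v u"
      by (simp add: d delta_r finite_W eq_commute[of _ u])
  qed
next
  case (comp_assoc h a b g c f d)
  have dd: "mdom f = c" "mdom g = b" using comp_assoc mtyp_dc by metis+
  show ?case unfolding P_def
  proof (intro exI conjI allI impI)
    show "mtyp (Comp (Comp f g) h) a d" "mtyp (Comp f (Comp g h)) a d" using comp_assoc by (auto intro: mtyp.intros)
    fix v u :: "bool list"
    show "sem (Comp (Comp f g) h) v u = sem (Comp f (Comp g h)) v u"
      by (simp add: dd sum_distrib_left sum_distrib_right mult.assoc sum.swap[of _ "W b"])
  qed
next
  case (tens_assoc f a b g c d h e e')
  have dd: "mdom f = a" "mcod f = b" "mdom g = c" "mcod g = d" using tens_assoc mtyp_dc by metis+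
  show ?case unfolding P_def
  proof (intro exI conjI allI impI)
    show "mtyp (Tens (Tens f g) h) (a+c+e) (b+d+e')" "mtyp (Tens f (Tens g h)) (a+c+e) (b+d+e')"
      using tens_assoc mtyp_Tens[OF mtyp_Tens[of f a b g c d] , of h e e'] mtyp_Tens[OF _ mtyp_Tens[of g c d h e e'], of f a b]
      by (auto simp: add.assoc)
    fix v u :: "bool list"
    show "sem (Tens (Tens f g) h) v u = sem (Tens f (Tens g h)) v u"
      by (simp add: dd drop_take mult.assoc add.commute)
  qed
next
  case (tens_unit_left f a b)
  have t: "mtyp (Tens (Id 0) f) a b" using mtyp_Tens[OF mtyp_Id[of 0] tens_unit_left] by simp
  show ?case unfolding P_def using t tens_unit_left by auto
next
  case (tens_unit_right f a b)
  have dd: "mdom f = a" "mcod f = b" using tens_unit_right mtyp_dc by metis+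
  have t: "mtyp (Tens f (Id 0)) a b" using mtyp_Tens[OF tens_unit_right mtyp_Id[of 0]] by simp
  show ?case unfolding P_def using t tens_unit_right dd
    by (intro exI[of _ a] exI[of _ b]) auto
next
  case (tens_id m n)
  show ?case unfolding P_def
  proof (intro exI conjI allI impI)
    show "mtyp (Tens (Id m) (Id n)) (m+n) (m+n)" "mtyp (Id (m+n)) (m+n) (m+n)" by (auto intro: mtyp.intros)
    fix v u :: "bool list" assume "length v = m+n" "length u = m+n"
    show "sem (Tens (Id m) (Id n)) v u = (sem (Id (m+n)) v u :: 'a)"
      by (auto, metis append_take_drop_id)
  qed
next
  case (interchange f' a b f c g' d e g e')
  have dd: "mdom f = b" "mcod f = c" "mdom g = e" "mcod g = e'"
    "mdom f' = a" "mcod f' = b" "mdom g' = d" "mcod g' = e" using interchange mtyp_dc by metis+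
  show ?case unfolding P_def
  proof (intro exI conjI allI impI)
    show "mtyp (Comp (Tens f g) (Tens f' g')) (a+d) (c+e')" "mtyp (Tens (Comp f f') (Comp g g')) (a+d) (c+e')"
      using interchange by (auto intro: mtyp.intros)
    fix v u :: "bool list"
    show "sem (Comp (Tens f g) (Tens f' g')) v u = sem (Tens (Comp f f') (Comp g g')) v u"
      apply (simp add: dd sum_W_add sum_product)
      apply (rule sum.cong, simp)
      apply (rule sum.cong, simp)
      apply (auto simp: W_def algebra_simps)
      done
  qed
next
  case rel_zigzag1
  show ?case unfolding P_def
  proof (intro exI conjI allI impI)
    show "mtyp (Comp (Tens (Id 1) Cap) (Tens Cup (Id 1))) 1 1" "mtyp (Zero 1 1) 1 1"
    proof -
      have h1: "mtyp (Tens (Id 1) Cap) 3 1" using mtyp_Tens[OF mtyp_Id[of 1] mtyp_Cap] by (simp add: numeral_eq_Suc)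
      have h2: "mtyp (Tens Cup (Id 1)) 1 3" using mtyp_Tens[OF mtyp_Cup mtyp_Id[of 1]] by (simp add: numeral_eq_Suc)
      show "mtyp (Comp (Tens (Id 1) Cap) (Tens Cup (Id 1))) 1 1"
        using mtyp_Comp[OF h2 h1] .
    qed (rule mtyp_Zero)
    fix v u :: "bool list"
    show "sem (Comp (Tens (Id 1) Cap) (Tens Cup (Id 1))) v u = (sem (Zero 1 1) v u :: 'a)"
      apply simp
      apply (rule sum.neutral)
      apply (clarsimp simp: W_def)
      apply (simp add: length_Suc_conv numeral_eq_Suc)
      apply clarsimp
      done
  qed
next
  case rel_zigzag2
  show ?case unfolding P_def
  proof (intro exI conjI allI impI)
    show "mtyp (Comp (Tens Cap (Id 1)) (Tens (Id 1) Cup)) 1 1" "mtyp (Zero 1 1) 1 1"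
    proof -
      have h1: "mtyp (Tens Cap (Id 1)) 3 1" using mtyp_Tens[OF mtyp_Cap mtyp_Id[of 1]] by (simp add: numeral_eq_Suc)
      have h2: "mtyp (Tens (Id 1) Cup) 1 3" using mtyp_Tens[OF mtyp_Id[of 1] mtyp_Cup] by (simp add: numeral_eq_Suc)
      show "mtyp (Comp (Tens Cap (Id 1)) (Tens (Id 1) Cup)) 1 1"
        using mtyp_Comp[OF h2 h1] .
    qed (rule mtyp_Zero)
    fix v u :: "bool list"
    show "sem (Comp (Tens Cap (Id 1)) (Tens (Id 1) Cup)) v u = (sem (Zero 1 1) v u :: 'a)"
      apply simp
      apply (rule sum.neutral)
      apply (clarsimp simp: W_def)
      apply (simp add: length_Suc_conv numeral_eq_Suc)
      apply clarsimp
      done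
  qed
next
  case rel_loop
  show ?case unfolding P_def
  proof (intro exI conjI allI impI)
    show "mtyp (Comp Cap Cup) 0 0" "mtyp (Id 0) 0 0" by (auto intro: mtyp.intros)
    fix v u :: "bool list" assume "length v = 0" "length u = 0"
    moreover have "[True, False] \<in> W 2" by (simp add: W_def)
    ultimately show "sem (Comp Cap Cup) v u = (sem (Id 0) v u :: 'a)"
      by (simp add: finite_W delta_l eq_commute[of _ "[True, False]"])
  qed
qed


fun deg :: "bool list \<Rightarrow> nat \<Rightarrow> nat" where
  "deg [] = id"
| "deg (x # w) = (if x then (\<lambda>n. n - 1) else Suc) \<circ> deg w"

lemma deg_append: "deg (v @ w) = deg v \<circ> deg w"
  by (induction v) (auto simp: comp_assoc)

lemma deg_split: "deg v = deg (take n v) \<circ> deg (drop n v)"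
  by (metis append_take_drop_id deg_append)

lemma sem_deg: "sem f v u \<noteq> 0 \<Longrightarrow> deg v = deg u"
proof (induction f arbitrary: v u)
  case (Comp f g)
  have "\<exists>w. sem f v w * sem g w u \<noteq> 0"
  proof (rule ccontr)
    assume "\<not> ?thesis"
    hence "(\<Sum>w\<in>W (mdom f). sem f v w * sem g w u) = 0" by (intro sum.neutral) blast
    with Comp.prems show False by simp
  qed
  then obtain w where "sem f v w * sem g w u \<noteq> 0" by blast
  with Comp show ?case by auto
next
  case (Tens f g)
  then have "deg (take (mcod f) v) = deg (take (mdom f) u)"
    "deg (drop (mcod f) v) = deg (drop (mdom f) u)" by auto
  then show ?case using deg_split[of v "mcod f"] deg_split[of u "mdom f"] by simp
next
  case (Add f g)
  show ?case
  proof (cases "sem f v u = 0")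
    case True
    with Add.prems have "sem g v u \<noteq> 0" by simp
    then show ?thesis by (rule Add.IH(2))
  next
    case False
    then show ?thesis by (rule Add.IH(1))
  qed
qed (auto split: if_splits)

theorem mainTheorem12:
  shows "\<not> tl0_rigid TYPE('k::field)"
proof
  assume "tl0_rigid TYPE('k::field)"
  then obtain Y where "tl0_left_dual TYPE('k) Y 1" unfolding tl0_rigid_def by blast
  then obtain ev coev :: "'k mor" where t: "mtyp ev (Y + 1) 0" "mtyp coev 0 (1 + Y)"
    and z: "tl0_eq (Comp (Tens (Id 1) ev) (Tens coev (Id 1))) (Id 1)"
    unfolding tl0_left_dual_def by blast
  have dd: "mcod coev = 1 + Y" "mdom ev = Y + 1" "mdom coev = 0" using t mtyp_dc by metis+
  from sound[OF z] obtain a b where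
    ty: "mtyp (Comp (Tens (Id 1) ev) (Tens coev (Id 1))) a b" "mtyp (Id 1 :: 'k mor) a b"
    and eq: "\<forall>v u. length v = b \<longrightarrow> length u = a \<longrightarrow>
       sem (Comp (Tens (Id 1) ev) (Tens coev (Id 1))) v u = sem (Id 1 :: 'k mor) v u"
    unfolding P_def by blast
  have ab: "a = 1" "b = 1" using ty(2) mtyp_dc by fastforce+
  have "sem (Comp (Tens (Id 1) ev) (Tens coev (Id 1))) [False] [False] = sem (Id 1 :: 'k mor) [False] [False]"
    using eq ab by simp
  moreover have "sem (Comp (Tens (Id 1) ev) (Tens coev (Id 1))) [False] [False] = 0"
  proof -
    have "sem (Tens (Id 1) ev) [False] w * sem (Tens coev (Id 1)) w [False] = 0" for w
    proof (rule ccontr)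
      assume nz: "sem (Tens (Id 1) ev) [False] w * sem (Tens coev (Id 1)) w [False] \<noteq> 0"
      hence h1: "take 1 w = [False]" by (auto split: if_splits)
      from nz have "sem coev (take (1 + Y) w) [] \<noteq> 0" by (simp add: dd)
      hence "deg (take (1 + Y) w) = deg []" using sem_deg by blast
      moreover from h1 obtain w' where "w = False # w'" by (cases w) auto
      ultimately have "Suc \<circ> deg (take Y w') = id" by simp
      hence "Suc (deg (take Y w') 0) = 0" by (metis comp_apply id_apply)
      thus False by simp
    qed
    thus ?thesis by (simp only: sem.simps(4)) (rule sum.neutral, blast)
  qed
  ultimately show False by simp
qed

end
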